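(* Let $\succcurlyeq$ be a preference relation on the set $\mathcal{B}$ of bets over a propositional language $\mathcal{L}$ satisfying Non-Triviality, Objective Expected Utility and Implication, and let $\mathcal{T}\subseteq\mathcal{L}$ be a theory. Then there exists a unique sub-theory $\mathcal{S}\subseteq\mathcal{T}$ such that $\succcurlyeq$ satisfies $\mathcal{S}$-Implication and, for any $\mathcal{S}'$ with $\mathcal{S}\subsetneq\mathcal{S}'\subseteq\mathcal{T}$, $\succcurlyeq$ does not satisfy $\mathcal{S}'$-Implication.
   Context: Let $\mathbb{P}$ be a set of propositional variables containing distinguished $\mathbf{T}$, $\mathbf{F}$, and $\mathcal{L}$ the language generated by $\neg,\land,\lor$; $\phi\implies\psi$ means $\psi$ is deducible from $\phi$ in classical propositional logic. A theory is a set $\mathcal{T}\subseteq\mathcal{L}$ closed under logical implication (anything deducible from elements of $\mathcal{T}$ lies in $\mathcal{T}$) with $\mathbf{F}\notin\mathcal{T}$. For a set of statements $\mathcal{S}$, write $\phi\overset{\mathcal{S}}{\implies}\psi$ if $\psi$ can be deduced from $\phi$ together with the elements of $\mathcal{S}$ in propositional logic. A bet is a finitely supported $b:\mathcal{L}\to[0,1]$ summing to $1$; $b_\phi$ is the point-mass bet on $\phi$; the set $\mathcal{B}$ of bets is a mixture space under pointwise mixtures and $\succcurlyeq$ is a relation on it. Non-Triviality: $b_{\mathbf{T}}\succcurlyeq b_\phi\succcurlyeq b_{\mathbf{F}}$ for all $\phi$ and $b_{\mathbf{T}}\succ b_{\mathbf{F}}$. Objective Expected Utility: $\succcurlyeq$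 is complete, transitive, Archimedean and satisfies Independence. Implication: $\phi\implies\psi$ implies $b_\psi\succcurlyeq b_\phi$. $\mathcal{S}$-Implication: $\phi\overset{\mathcal{S}}{\implies}\psi$ implies $b_\psi\succcurlyeq b_\phi$. *)

theory Defs
  imports Complex_Main
begin

datatype 'a form = Var 'a | Neg "'a form" | Conj "'a form" "'a form" | Disj "'a form" "'a form"

primrec eval :: "('a \<Rightarrow> bool) \<Rightarrow> 'a form \<Rightarrow> bool" where
  "eval v (Var p) = v p"
| "eval v (Neg f) = (\<not> eval v f)"
| "eval v (Conj f g) = (eval v f \<and> eval v g)"
| "eval v (Disj f g) = (eval v f \<or> eval v g)"

text \<open>Admissible valuations: the distinguished variables Tv, Fv denote truth and falsity.\<close>
definition admissible :: "'a \<Rightarrow> 'a \<Rightarrow> ('a \<Rightarrow> bool) \<Rightarrow> bool" where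
  "admissible Tv Fv v \<longleftrightarrow> v Tv \<and> \<not> v Fv"

text \<open>psi is deducible from the set of premises S (finitely many premises; classical logic,
  via soundness/completeness rendered semantically).\<close>
definition deducible :: "'a \<Rightarrow> 'a \<Rightarrow> 'a form set \<Rightarrow> 'a form \<Rightarrow> bool" where
  "deducible Tv Fv S \<psi> \<longleftrightarrow>
     (\<exists>G. G \<subseteq> S \<and> finite G \<and>
        (\<forall>v. admissible Tv Fv v \<longrightarrow> (\<forall>\<chi>\<in>G. eval v \<chi>) \<longrightarrow> eval v \<psi>))"

definition implies :: "'a \<Rightarrow> 'a \<Rightarrow> 'a form \<Rightarrow> 'a form \<Rightarrow> bool" where
  "implies Tv Fv \<phi> \<psi> \<longleftrightarrow> deducible Tv Fv {\<phi>} \<psi>"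

definition S_implies :: "'a \<Rightarrow> 'a \<Rightarrow> 'a form set \<Rightarrow> 'a form \<Rightarrow> 'a form \<Rightarrow> bool" where
  "S_implies Tv Fv S \<phi> \<psi> \<longleftrightarrow> deducible Tv Fv (insert \<phi> S) \<psi>"

definition is_theory :: "'a \<Rightarrow> 'a \<Rightarrow> 'a form set \<Rightarrow> bool" where
  "is_theory Tv Fv Th \<longleftrightarrow> (\<forall>\<psi>. deducible Tv Fv Th \<psi> \<longrightarrow> \<psi> \<in> Th) \<and> Var Fv \<notin> Th"

type_synonym 'a bet = "'a form \<Rightarrow> real"

definition is_bet :: "'a bet \<Rightarrow> bool" where
  "is_bet b \<longleftrightarrow> finite {\<phi>. b \<phi> \<noteq> 0} \<and> (\<forall>\<phi>. 0 \<le> b \<phi> \<and> b \<phi> \<le> 1)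
                 \<and> sum b {\<phi>. b \<phi> \<noteq> 0} = 1"

definition bets :: "'a bet set" where "bets = {b. is_bet b}"

definition mix :: "real \<Rightarrow> 'a bet \<Rightarrow> 'a bet \<Rightarrow> 'a bet" where
  "mix \<alpha> p q = (\<lambda>\<phi>. \<alpha> * p \<phi> + (1 - \<alpha>) * q \<phi>)"

definition point :: "'a form \<Rightarrow> 'a bet" where
  "point \<phi> = (\<lambda>\<psi>. if \<psi> = \<phi> then 1 else 0)"

definition strict :: "('a bet \<Rightarrow> 'a bet \<Rightarrow> bool) \<Rightarrow> 'a bet \<Rightarrow> 'a bet \<Rightarrow> bool" where
  "strict R p q \<longleftrightarrow> R p q \<and> \<not> R q p"

definition non_triviality :: "'a \<Rightarrow> 'a \<Rightarrow> ('a bet \<Rightarrow> 'a bet \<Rightarrow> bool) \<Rightarrow> bool" where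
  "non_triviality Tv Fv R \<longleftrightarrow>
     (\<forall>\<phi>. R (point (Var Tv)) (point \<phi>) \<and> R (point \<phi>) (point (Var Fv)))
     \<and> strict R (point (Var Tv)) (point (Var Fv))"

definition objective_EU :: "('a bet \<Rightarrow> 'a bet \<Rightarrow> bool) \<Rightarrow> bool" where
  "objective_EU R \<longleftrightarrow>
     (\<forall>p\<in>bets. \<forall>q\<in>bets. R p q \<or> R q p)
   \<and> (\<forall>p\<in>bets. \<forall>q\<in>bets. \<forall>r\<in>bets. R p q \<longrightarrow> R q r \<longrightarrow> R p r)
   \<and> (\<forall>p\<in>bets. \<forall>q\<in>bets. \<forall>r\<in>bets. strict R p q \<longrightarrow> strict R q r \<longrightarrow>
        (\<exists>\<alpha> \<beta>. 0 < \<alpha> \<and> \<alpha> < 1 \<and> 0 < \<beta> \<and> \<beta> < 1 \<and>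
           strict R (mix \<alpha> p r) q \<and> strict R q (mix \<beta> p r)))
   \<and> (\<forall>p\<in>bets. \<forall>q\<in>bets. \<forall>r\<in>bets. \<forall>\<alpha>. 0 < \<alpha> \<and> \<alpha> < 1 \<longrightarrow>
        (R p q \<longleftrightarrow> R (mix \<alpha> p r) (mix \<alpha> q r)))"

definition implication_ax :: "'a \<Rightarrow> 'a \<Rightarrow> ('a bet \<Rightarrow> 'a bet \<Rightarrow> bool) \<Rightarrow> bool" where
  "implication_ax Tv Fv R \<longleftrightarrow> (\<forall>\<phi> \<psi>. implies Tv Fv \<phi> \<psi> \<longrightarrow> R (point \<psi>) (point \<phi>))"

definition S_implication_ax :: "'a \<Rightarrow> 'a \<Rightarrow> 'a form set \<Rightarrow> ('a bet \<Rightarrow> 'a bet \<Rightarrow> bool) \<Rightarrow> bool" where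
  "S_implication_ax Tv Fv S R \<longleftrightarrow> (\<forall>\<phi> \<psi>. S_implies Tv Fv S \<phi> \<psi> \<longrightarrow> R (point \<psi>) (point \<phi>))"

end

theory Submission
  imports Defs
begin

definition ent :: "'a \<Rightarrow> 'a \<Rightarrow> 'a form set \<Rightarrow> 'a form \<Rightarrow> 'a form \<Rightarrow> bool" where
  "ent Tv Fv G \<phi> \<psi> \<longleftrightarrow> (\<forall>v. admissible Tv Fv v \<longrightarrow> eval v \<phi> \<longrightarrow> (\<forall>\<chi>\<in>G. eval v \<chi>) \<longrightarrow> eval v \<psi>)"

lemma ded_insert:
  "deducible Tv Fv (insert \<phi> S) \<psi> \<longleftrightarrow> (\<exists>G. G \<subseteq> S \<and> finite G \<and> ent Tv Fv G \<phi> \<psi>)"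
proof
  assume "deducible Tv Fv (insert \<phi> S) \<psi>"
  then obtain G where G: "G \<subseteq> insert \<phi> S" "finite G"
    "\<forall>v. admissible Tv Fv v \<longrightarrow> (\<forall>\<chi>\<in>G. eval v \<chi>) \<longrightarrow> eval v \<psi>"
    unfolding deducible_def by blast
  show "\<exists>G. G \<subseteq> S \<and> finite G \<and> ent Tv Fv G \<phi> \<psi>"
    by (rule exI[of _ "G - {\<phi>}"]) (use G in \<open>auto simp: ent_def\<close>)
next
  assume "\<exists>G. G \<subseteq> S \<and> finite G \<and> ent Tv Fv G \<phi> \<psi>"
  then obtain G where G: "G \<subseteq> S" "finite G" "ent Tv Fv G \<phi> \<psi>" by blast
  show "deducible Tv Fv (insert \<phi> S) \<psi>"
    unfolding deducible_def
    by (rule exI[of _ "insert \<phi> G"]) (use G in \<open>auto simp: ent_def\<close>)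
qed

lemma point_bet: "point \<phi> \<in> bets"
proof -
  have "{\<psi>. point \<phi> \<psi> \<noteq> 0} = {\<phi>}" by (auto simp: point_def)
  then show ?thesis by (auto simp: bets_def is_bet_def point_def)
qed

lemma finite_good:
  assumes fin: "finite G"
    and single: "\<forall>s\<in>G. S_implication_ax Tv Fv {s} R"
    and tr: "\<forall>a b c. R (point a) (point b) \<longrightarrow> R (point b) (point c) \<longrightarrow> R (point a) (point c)"
    and imp: "implication_ax Tv Fv R"
  shows "\<forall>\<phi> \<psi>. ent Tv Fv G \<phi> \<psi> \<longrightarrow> R (point \<psi>) (point \<phi>)"
  using fin single
proof (induction G rule: finite_induct)
  case empty
  show ?case
  proof (intro allI impI)
    fix \<phi> \<psi> assume "ent Tv Fv {} \<phi> \<psi>"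
    then have "implies Tv Fv \<phi> \<psi>"
      unfolding implies_def deducible_def ent_def by (intro exI[of _ "{\<phi>}"]) auto
    then show "R (point \<psi>) (point \<phi>)" using imp unfolding implication_ax_def by blast
  qed
next
  case (insert s G)
  show ?case
  proof (intro allI impI)
    fix \<phi> \<psi> assume e: "ent Tv Fv (insert s G) \<phi> \<psi>"
    then have "ent Tv Fv G (Conj \<phi> s) \<psi>" by (auto simp: ent_def)
    then have 1: "R (point \<psi>) (point (Conj \<phi> s))" using insert by blast
    have "S_implies Tv Fv {s} \<phi> (Conj \<phi> s)"
      unfolding S_implies_def ded_insert by (intro exI[of _ "{s}"]) (auto simp: ent_def)
    then have 2: "R (point (Conj \<phi> s)) (point \<phi>)"
      using insert.prems unfolding S_implication_ax_def by blast
    show "R (point \<psi>) (point \<phi>)" using tr 1 2 by blast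
  qed
qed

lemma good_iff:
  assumes tr: "\<forall>a b c. R (point a) (point b) \<longrightarrow> R (point b) (point c) \<longrightarrow> R (point a) (point c)"
    and imp: "implication_ax Tv Fv R"
  shows "S_implication_ax Tv Fv S R \<longleftrightarrow> (\<forall>s\<in>S. S_implication_ax Tv Fv {s} R)"
proof
  assume "S_implication_ax Tv Fv S R"
  then show "\<forall>s\<in>S. S_implication_ax Tv Fv {s} R"
    unfolding S_implication_ax_def S_implies_def ded_insert by blast
next
  assume a: "\<forall>s\<in>S. S_implication_ax Tv Fv {s} R"
  show "S_implication_ax Tv Fv S R"
    unfolding S_implication_ax_def S_implies_def ded_insert
  proof (intro allI impI)
    fix \<phi> \<psi> assume "\<exists>G\<subseteq>S. finite G \<and> ent Tv Fv G \<phi> \<psi>"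
    then obtain G where G: "G \<subseteq> S" "finite G" "ent Tv Fv G \<phi> \<psi>" by blast
    have "\<forall>s\<in>G. S_implication_ax Tv Fv {s} R" using G a by blast
    from finite_good[where R=R and Tv=Tv and Fv=Fv, OF G(2) this tr imp] G(3) show "R (point \<psi>) (point \<phi>)" by blast
  qed
qed

theorem proposition5:
  fixes Tv Fv :: 'a and R :: "'a bet \<Rightarrow> 'a bet \<Rightarrow> bool" and Th :: "'a form set"
  assumes "Tv \<noteq> Fv"
    and "non_triviality Tv Fv R"
    and "objective_EU R"
    and "implication_ax Tv Fv R"
    and "is_theory Tv Fv Th"
  shows "\<exists>!S. S \<subseteq> Th \<and> is_theory Tv Fv S \<and> S_implication_ax Tv Fv S R
              \<and> (\<forall>S'. S \<subset> S' \<and> S' \<subseteq> Th \<longrightarrow> \<not> S_implication_ax Tv Fv S' R)"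
proof -
  have tr: "\<forall>a b c. R (point a) (point b) \<longrightarrow> R (point b) (point c) \<longrightarrow> R (point a) (point c)"
  proof (intro allI impI)
    fix a b c assume "R (point a) (point b)" "R (point b) (point c)"
    moreover have "\<forall>p\<in>bets. \<forall>q\<in>bets. \<forall>r\<in>bets. R p q \<longrightarrow> R q r \<longrightarrow> R p r"
      using assms(3) unfolding objective_EU_def by (elim conjE)
    ultimately show "R (point a) (point c)" using point_bet by metis
  qed
  note gi = good_iff[OF tr assms(4)]
  define M where "M = {s\<in>Th. S_implication_ax Tv Fv {s} R}"
  have Msub: "M \<subseteq> Th" by (auto simp: M_def)
  have Mgood: "S_implication_ax Tv Fv M R" by (rule gi[THEN iffD2]) (simp add: M_def)
  have Mmax: "S' \<subseteq> M" if "S' \<subseteq> Th" "S_implication_ax Tv Fv S' R" for S'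
  proof
    fix x assume "x \<in> S'"
    moreover have "\<forall>s\<in>S'. S_implication_ax Tv Fv {s} R" using gi[of S'] that(2) by blast
    ultimately show "x \<in> M" using that(1) by (auto simp: M_def)
  qed
  have Mth: "is_theory Tv Fv M"
    unfolding is_theory_def
  proof (intro conjI allI impI)
    fix \<psi> assume d: "deducible Tv Fv M \<psi>"
    then obtain H0 where H0: "H0 \<subseteq> M" "finite H0"
        "\<forall>v. admissible Tv Fv v \<longrightarrow> (\<forall>\<chi>\<in>H0. eval v \<chi>) \<longrightarrow> eval v \<psi>"
      unfolding deducible_def by blast
    have "H0 \<subseteq> Th" using H0(1) Msub by (rule subset_trans)
    then have "deducible Tv Fv Th \<psi>" unfolding deducible_def using H0(2,3) by blast
    then have "\<psi> \<in> Th" using assms(5) unfolding is_theory_def by simp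
    moreover have "S_implication_ax Tv Fv {\<psi>} R"
      unfolding S_implication_ax_def
    proof (intro allI impI)
      fix \<phi> \<chi> assume "S_implies Tv Fv {\<psi>} \<phi> \<chi>"
      then obtain G where G: "G \<subseteq> {\<psi>}" "ent Tv Fv G \<phi> \<chi>"
        unfolding S_implies_def ded_insert by blast
      from d obtain H where H: "H \<subseteq> M" "finite H"
        "\<forall>v. admissible Tv Fv v \<longrightarrow> (\<forall>\<chi>\<in>H. eval v \<chi>) \<longrightarrow> eval v \<psi>"
        unfolding deducible_def by blast
      have "ent Tv Fv H \<phi> \<chi>" unfolding ent_def
      proof (intro allI impI)
        fix v assume v: "admissible Tv Fv v" "eval v \<phi>" "\<forall>x\<in>H. eval v x"
        then have "eval v \<psi>" using H(3) by blast
        then have "\<forall>x\<in>G. eval v x" using G(1) by blast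
        then show "eval v \<chi>" using G(2) v unfolding ent_def by blast
      qed
      then have "S_implies Tv Fv M \<phi> \<chi>"
        unfolding S_implies_def ded_insert using H by blast
      then show "R (point \<chi>) (point \<phi>)" using Mgood unfolding S_implication_ax_def by blast
    qed
    ultimately show "\<psi> \<in> M" by (auto simp: M_def)
  next
    show "Var Fv \<notin> M" using Msub assms(5) unfolding is_theory_def by blast
  qed
  show ?thesis
  proof (rule ex1I[of _ M])
    show "M \<subseteq> Th \<and> is_theory Tv Fv M \<and> S_implication_ax Tv Fv M R
              \<and> (\<forall>S'. M \<subset> S' \<and> S' \<subseteq> Th \<longrightarrow> \<not> S_implication_ax Tv Fv S' R)"
      using Msub Mth Mgood Mmax by blast
  next
    fix S assume S: "S \<subseteq> Th \<and> is_theory Tv Fv S \<and> S_implication_ax Tv Fv S R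
              \<and> (\<forall>S'. S \<subset> S' \<and> S' \<subseteq> Th \<longrightarrow> \<not> S_implication_ax Tv Fv S' R)"
    then have "S \<subseteq> M" using Mmax by blast
    then show "S = M" using S Msub Mgood by blast
  qed
qed

end
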